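(* Let $H$ be a Hermitian operator on a $d$-dimensional Hilbert space with spectral decomposition $H=\sum_{i=1}^M\lambda_i\Pi_i$, where $\lambda_M>\cdots>\lambda_1$ are the distinct eigenvalues and $\Pi_i$ the spectral projections ($\Pi_i\Pi_j=\delta_{ij}\Pi_i$, $\sum_i\Pi_i=I$), and let $\beta\ge 0$. Write $\gamma=\frac{\Pi_1}{\operatorname{Tr}[\Pi_1]}$ and $\tau_\beta=\frac{e^{-\beta H}}{\operatorname{Tr}[e^{-\beta H}]}$. Then $$\frac{1}{2}\|\tau_\beta-\gamma\|_1=1-F(\tau_\beta,\gamma)\qquad\text{and}\qquad D(\gamma\|\tau_\beta)=-\ln F(\tau_\beta,\gamma).$$
   Context: $\|A\|_1=\operatorname{Tr}[\sqrt{A^\dagger A}]$; $F(\rho,\sigma)=\|\sqrt{\rho}\sqrt{\sigma}\|_1^2$ is the fidelity; $D(\rho\|\sigma)=\operatorname{Tr}[\rho(\ln\rho-\ln\sigma)]$ is the quantum relative entropy. *)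

theory Defs
  imports "Jordan_Normal_Form.Schur_Decomposition" Complex_Main
begin

definition mtrace :: "complex mat \<Rightarrow> complex" where
  "mtrace A = (\<Sum>i<dim_row A. A $$ (i,i))"

definition hermitian :: "complex mat \<Rightarrow> bool" where
  "hermitian A \<longleftrightarrow> square_mat A \<and> mat_adjoint A = A"

definition unitary :: "nat \<Rightarrow> complex mat \<Rightarrow> bool" where
  "unitary n U \<longleftrightarrow> U \<in> carrier_mat n n \<and> U * mat_adjoint U = 1\<^sub>m n \<and> mat_adjoint U * U = 1\<^sub>m n"

definition msum :: "nat \<Rightarrow> 'i set \<Rightarrow> ('i \<Rightarrow> complex mat) \<Rightarrow> complex mat" where
  "msum n I f = mat n n (\<lambda>(r,c). \<Sum>i\<in>I. f i $$ (r,c))"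

definition mfun :: "(real \<Rightarrow> real) \<Rightarrow> complex mat \<Rightarrow> complex mat" where
  "mfun f A = (SOME B. \<exists>U (l :: nat \<Rightarrow> real). unitary (dim_row A) U \<and>
      A = U * mat_diag (dim_row A) (\<lambda>k. complex_of_real (l k)) * mat_adjoint U \<and>
      B = U * mat_diag (dim_row A) (\<lambda>k. complex_of_real (f (l k))) * mat_adjoint U)"

definition trace_norm :: "complex mat \<Rightarrow> real" where
  "trace_norm A = Re (mtrace (mfun sqrt (mat_adjoint A * A)))"

definition fidelity :: "complex mat \<Rightarrow> complex mat \<Rightarrow> real" where
  "fidelity \<rho> \<sigma> = (trace_norm (mfun sqrt \<rho> * mfun sqrt \<sigma>))\<^sup>2"

text \<open>Quantum relative entropy D(rho||sigma) = Tr[rho (ln rho - ln sigma)];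
  Isabelle's ln 0 = 0 implements the convention 0 ln 0 = 0 on the kernel of rho.\<close>
definition rel_entropy :: "complex mat \<Rightarrow> complex mat \<Rightarrow> real" where
  "rel_entropy \<rho> \<sigma> = Re (mtrace (\<rho> * (mfun ln \<rho> - mfun ln \<sigma>)))"

end

theory Submission
  imports Defs
begin

lemma mult_cc[simp]: "A \<in> carrier_mat n n \<Longrightarrow> B \<in> carrier_mat n n \<Longrightarrow> A * B \<in> carrier_mat n n"
  by (rule mult_carrier_mat)

lemma adj_eq: "mat_adjoint (A::complex mat) = mat (dim_col A) (dim_row A) (\<lambda>(i,j). cnj (A $$ (j,i)))"
  by (rule eq_matI) (auto simp: mat_adjoint_def mat_of_rows_def)

lemma adj_carrier[simp]: "(A::complex mat) \<in> carrier_mat n m \<Longrightarrow> mat_adjoint A \<in> carrier_mat m n"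
  by (auto simp: adj_eq)

lemma adj_dim[simp]: "dim_row (mat_adjoint (A::complex mat)) = dim_col A" "dim_col (mat_adjoint A) = dim_row A"
  by (auto simp: adj_eq)

lemma adj_index[simp]: "i < dim_col A \<Longrightarrow> j < dim_row A \<Longrightarrow> mat_adjoint (A::complex mat) $$ (i,j) = cnj (A $$ (j,i))"
  by (auto simp: adj_eq)

lemma adj_adj[simp]: "mat_adjoint (mat_adjoint (A::complex mat)) = A"
  by (rule eq_matI) auto

lemma adj_mult: assumes "(A::complex mat) \<in> carrier_mat n m" "B \<in> carrier_mat m k"
  shows "mat_adjoint (A * B) = mat_adjoint B * mat_adjoint A"
  using assms by (intro eq_matI) (auto simp: scalar_prod_def intro!: sum.cong)

lemma adj_one[simp]: "mat_adjoint (1\<^sub>m n :: complex mat) = 1\<^sub>m n"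
  by (rule eq_matI) auto

lemma adj_minus: assumes "(A::complex mat) \<in> carrier_mat n m" "B \<in> carrier_mat n m"
  shows "mat_adjoint (A - B) = mat_adjoint A - mat_adjoint B"
  using assms by (intro eq_matI) auto

lemma adj_smult: "mat_adjoint (a \<cdot>\<^sub>m (A::complex mat)) = cnj a \<cdot>\<^sub>m mat_adjoint A"
  by (intro eq_matI) auto


lemma msum_carrier[simp]: "msum n I f \<in> carrier_mat n n"
  by (simp add: msum_def)
lemma msum_dim[simp]: "dim_row (msum n I f) = n" "dim_col (msum n I f) = n"
  by (simp_all add: msum_def)
lemma msum_index[simp]: "i < n \<Longrightarrow> j < n \<Longrightarrow> msum n I f $$ (i,j) = (\<Sum>k\<in>I. f k $$ (i,j))"
  by (simp add: msum_def)

lemma msum_cong: "(\<And>i. i \<in> I \<Longrightarrow> f i = g i) \<Longrightarrow> msum n I f = msum n I g"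
  unfolding msum_def by (auto intro!: sum.cong)

lemma msum_mult_left: assumes "X \<in> carrier_mat n n" "\<And>i. i \<in> I \<Longrightarrow> f i \<in> carrier_mat n n"
  shows "X * msum n I f = msum n I (\<lambda>i. X * f i)"
proof (rule eq_matI)
  have dims: "\<And>i. i \<in> I \<Longrightarrow> dim_row (f i) = n \<and> dim_col (f i) = n" using assms by auto
  fix r s assume rs: "r < dim_row (msum n I (\<lambda>i. X * f i))" "s < dim_col (msum n I (\<lambda>i. X * f i))"
  have "(X * msum n I f) $$ (r,s) = (\<Sum>k<n. X $$ (r,k) * (\<Sum>i\<in>I. f i $$ (k,s)))"
    using rs assms(1) by (simp add: scalar_prod_def atLeast0LessThan)
  also have "\<dots> = (\<Sum>i\<in>I. \<Sum>k<n. X $$ (r,k) * f i $$ (k,s))"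
    by (simp add: sum_distrib_left sum.swap[of _ I])
  also have "\<dots> = msum n I (\<lambda>i. X * f i) $$ (r,s)"
    using rs assms dims by (auto simp: scalar_prod_def atLeast0LessThan intro!: sum.cong)
  finally show "(X * msum n I f) $$ (r,s) = msum n I (\<lambda>i. X * f i) $$ (r,s)" .
qed (use assms in auto)

lemma msum_mult_right: assumes "X \<in> carrier_mat n n" "\<And>i. i \<in> I \<Longrightarrow> f i \<in> carrier_mat n n"
  shows "msum n I f * X = msum n I (\<lambda>i. f i * X)"
proof (rule eq_matI)
  have dims: "\<And>i. i \<in> I \<Longrightarrow> dim_row (f i) = n \<and> dim_col (f i) = n" using assms by auto
  fix r s assume rs: "r < dim_row (msum n I (\<lambda>i. f i * X))" "s < dim_col (msum n I (\<lambda>i. f i * X))"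
  have "(msum n I f * X) $$ (r,s) = (\<Sum>k<n. (\<Sum>i\<in>I. f i $$ (r,k)) * X $$ (k,s))"
    using rs assms(1) by (simp add: scalar_prod_def atLeast0LessThan)
  also have "\<dots> = (\<Sum>i\<in>I. \<Sum>k<n. f i $$ (r,k) * X $$ (k,s))"
    by (simp add: sum_distrib_right sum.swap[of _ I])
  also have "\<dots> = msum n I (\<lambda>i. f i * X) $$ (r,s)"
    using rs assms dims by (auto simp: scalar_prod_def atLeast0LessThan intro!: sum.cong)
  finally show "(msum n I f * X) $$ (r,s) = msum n I (\<lambda>i. f i * X) $$ (r,s)" .
qed (use assms in auto)

lemma msum_smult: "(a::complex) \<cdot>\<^sub>m msum n I f = msum n I (\<lambda>i. a \<cdot>\<^sub>m f i)"
  if "\<And>i. i \<in> I \<Longrightarrow> f i \<in> carrier_mat n n"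
proof -
  have dims: "\<And>i. i \<in> I \<Longrightarrow> dim_row (f i) = n \<and> dim_col (f i) = n" using that by auto
  show ?thesis using dims by (intro eq_matI) (auto simp: sum_distrib_left intro!: sum.cong)
qed

lemma msum_minus: "msum n I f - msum n I g = msum n I (\<lambda>i. f i - g i)"
  if "\<And>i. i \<in> I \<Longrightarrow> g i \<in> carrier_mat n n" for f g :: "nat \<Rightarrow> complex mat"
proof -
  have dims: "\<And>i. i \<in> I \<Longrightarrow> dim_row (g i) = n \<and> dim_col (g i) = n" using that by auto
  show ?thesis using dims by (intro eq_matI) (auto simp: sum_subtractf[symmetric] intro!: sum.cong)
qed

lemma msum_adj: "mat_adjoint (msum n I f) = msum n I (\<lambda>i. mat_adjoint (f i))"
  if "\<And>i. i \<in> I \<Longrightarrow> f i \<in> carrier_mat n n"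
proof -
  have dims: "\<And>i. i \<in> I \<Longrightarrow> dim_row (f i) = n \<and> dim_col (f i) = n" using that by auto
  show ?thesis using dims by (intro eq_matI) (auto intro!: sum.cong)
qed

lemma msum_delta: assumes "finite I" "i \<in> I" "X \<in> carrier_mat n n"
  shows "msum n I (\<lambda>j. if j = i then X else 0\<^sub>m n n) = (X :: complex mat)"
proof (rule eq_matI)
  fix r s assume rs: "r < dim_row X" "s < dim_col X"
  have "msum n I (\<lambda>j. if j = i then X else 0\<^sub>m n n) $$ (r,s) = (\<Sum>j\<in>I. if j = i then X $$ (r,s) else 0)"
  proof -
    have "\<And>k. (if k = i then X else 0\<^sub>m n n) $$ (r,s) = (if k = i then X $$ (r,s) else 0)"
      using rs assms by auto
    then show ?thesis using rs assms by simp
  qed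
  also have "\<dots> = X $$ (r,s)" using assms by simp
  finally show "msum n I (\<lambda>j. if j = i then X else 0\<^sub>m n n) $$ (r,s) = X $$ (r,s)" .
qed (use assms in auto)

lemma mtrace_msum: assumes "\<And>i. i \<in> I \<Longrightarrow> f i \<in> carrier_mat n n"
  shows "mtrace (msum n I f) = (\<Sum>i\<in>I. mtrace (f i))"
  using assms unfolding mtrace_def by (auto simp: sum.swap[of _ I] intro!: sum.cong)

lemma mtrace_smult: "A \<in> carrier_mat n n \<Longrightarrow> mtrace (a \<cdot>\<^sub>m A) = a * mtrace A"
  unfolding mtrace_def by (auto simp: sum_distrib_left)


lemma cs_real: assumes "(w :: complex vec) \<in> carrier_vec n"
  shows "w \<bullet>c w = complex_of_real (\<Sum>i<n. (cmod (w $ i))\<^sup>2)"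
proof -
  have "w \<bullet>c w = (\<Sum>i<n. w$i * cnj (w$i))" using assms by (simp add: scalar_prod_def atLeast0LessThan)
  also have "\<dots> = complex_of_real (\<Sum>i<n. (cmod (w $ i))\<^sup>2)" unfolding of_real_sum complex_norm_square ..
  finally show ?thesis .
qed

lemma cs_smult: assumes "(v :: complex vec) \<in> carrier_vec n" "w \<in> carrier_vec n"
  shows "(a \<cdot>\<^sub>v v) \<bullet>c (b \<cdot>\<^sub>v w) = a * cnj b * (v \<bullet>c w)"
  using assms by (simp add: scalar_prod_def sum_distrib_left algebra_simps)

definition vnormalize :: "complex vec \<Rightarrow> complex vec" where
  "vnormalize w = (1 / complex_of_real (sqrt (Re (w \<bullet>c w)))) \<cdot>\<^sub>v w"

lemma vnormalize_carrier[simp]: "w \<in> carrier_vec n \<Longrightarrow> vnormalize w \<in> carrier_vec n"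
  by (simp add: vnormalize_def)

lemma vnormalize_norm: assumes w: "w \<in> carrier_vec n" "w \<noteq> 0\<^sub>v n"
  shows "vnormalize w \<bullet>c vnormalize w = 1"
proof -
  define r where "r = (\<Sum>i<n. (cmod (w $ i))\<^sup>2)"
  have wr: "w \<bullet>c w = complex_of_real r" unfolding r_def by (rule cs_real[OF w(1)])
  have "w \<bullet>c w \<noteq> 0" using conjugate_square_eq_0_vec[OF w(1)] w(2) by simp
  then have r0: "r \<noteq> 0" using wr by simp
  have rnn: "r \<ge> 0" unfolding r_def by (simp add: sum_nonneg)
  have "vnormalize w \<bullet>c vnormalize w = 1 / complex_of_real (sqrt r) * cnj (1 / complex_of_real (sqrt r)) * complex_of_real r"
    unfolding vnormalize_def wr Re_complex_of_real by (subst cs_smult[OF w(1) w(1)]) (simp only: wr)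
  also have "\<dots> = complex_of_real (1 / sqrt r * (1 / sqrt r) * r)"
    by (metis complex_cnj_complex_of_real of_real_1 of_real_divide of_real_mult)
  also have "1 / sqrt r * (1 / sqrt r) * r = 1" using r0 rnn
    by (simp add: field_simps)
  finally show ?thesis by simp
qed

lemma vnormalize_unit: assumes "w \<in> carrier_vec n" "w \<bullet>c w = 1" shows "vnormalize w = w"
  using assms by (simp add: vnormalize_def)

lemma vnormalize_orth: assumes "v \<in> carrier_vec n" "w \<in> carrier_vec n" "v \<bullet>c w = 0"
  shows "vnormalize v \<bullet>c vnormalize w = 0"
  unfolding vnormalize_def by (subst cs_smult[OF assms(1,2)]) (simp add: assms(3))

lemma ev_exists: fixes A :: "complex mat" assumes A: "A \<in> carrier_mat n n" and n: "n > 0"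
  shows "\<exists>e v. eigenvector A v e"
proof -
  obtain as where cp: "char_poly A = (\<Prod>a\<leftarrow>as. [:- a, 1:])" and len: "length as = n"
    using char_poly_factorized[OF A] by blast
  then obtain e rest where as: "as = e # rest" using n by (cases as) auto
  have "poly (char_poly A) e = 0" unfolding cp as by simp
  then have "eigenvalue A e" using eigenvalue_root_char_poly[OF A] by simp
  then show ?thesis unfolding eigenvalue_def by blast
qed

lemma unit_ext: assumes u: "u \<in> carrier_vec n" "u \<bullet>c u = 1"
  shows "\<exists>W. unitary n W \<and> col W 0 = u"
proof -
  have u0: "u \<noteq> 0\<^sub>v n" using u by auto
  interpret cof_vec_space n "TYPE(complex)" .
  define b where "b = basis_completion u"
  have b: "set b \<subseteq> carrier_vec n" "distinct b" "\<not> lin_dep (set b)" "length b = n" "hd b = u"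
    using basis_completion[OF u(1) u0] unfolding b_def by auto
  have n0: "n \<noteq> 0"
  proof
    assume "n = 0"
    then have "u = 0\<^sub>v n" using u(1) by (intro eq_vecI) auto
    then show False using u0 by simp
  qed
  obtain vs where bv: "b = u # vs" using b(4,5) n0 by (cases b) auto
  define ws where "ws = gram_schmidt n b"
  have ws: "set ws \<subseteq> carrier_vec n" "corthogonal ws" "length ws = n"
    using gram_schmidt_result[OF b(1) b(2) b(3) ws_def] b(4) by auto
  have hd: "hd ws = u" unfolding ws_def bv using gram_schmidt_hd[OF u(1)] by blast
  have wsc: "i < n \<Longrightarrow> ws ! i \<in> carrier_vec n" for i using ws by auto
  define ws' where "ws' = map vnormalize ws"
  have len': "length ws' = n" unfolding ws'_def using ws by simp
  have wsc': "i < n \<Longrightarrow> ws' ! i \<in> carrier_vec n" for i unfolding ws'_def using wsc ws by simp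
  have orth: "ws' ! i \<bullet>c ws' ! j = (if i = j then 1 else 0)" if ij: "i < n" "j < n" for i j
  proof (cases "i = j")
    case True
    have "ws ! i \<bullet>c ws ! i \<noteq> 0" using corthogonalD[OF ws(2), of i i] ij ws(3) by auto
    then have "ws ! i \<noteq> 0\<^sub>v n" by auto
    then show ?thesis using True vnormalize_norm[OF wsc[OF ij(1)]] ij ws(3) unfolding ws'_def by simp
  next
    case False
    have "ws ! i \<bullet>c ws ! j = 0" using corthogonalD[OF ws(2), of i j] ij ws(3) False by auto
    then show ?thesis using False vnormalize_orth[OF wsc[OF ij(1)] wsc[OF ij(2)]] ij ws(3) unfolding ws'_def by simp
  qed
  define W where "W = mat_of_cols n ws'"
  have Wc: "W \<in> carrier_mat n n" unfolding W_def using len' by auto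
  have WW: "mat_adjoint W * W = 1\<^sub>m n"
  proof (rule eq_matI)
    fix i j assume ij: "i < dim_row (1\<^sub>m n)" "j < dim_col (1\<^sub>m n)"
    then have ij': "i < n" "j < n" by auto
    have "(mat_adjoint W * W) $$ (i,j) = (\<Sum>k<n. cnj (W $$ (k,i)) * W $$ (k,j))"
      using ij' Wc by (simp add: scalar_prod_def atLeast0LessThan)
    also have "\<dots> = (\<Sum>k<n. ws' ! j $ k * cnj (ws' ! i $ k))"
      using ij' len' by (auto simp: W_def mat_of_cols_index intro!: sum.cong)
    also have "\<dots> = ws' ! j \<bullet>c ws' ! i"
      using wsc'[OF ij'(1)] wsc'[OF ij'(2)] by (simp add: scalar_prod_def atLeast0LessThan)
    also have "\<dots> = 1\<^sub>m n $$ (i,j)" using orth[OF ij'(2) ij'(1)] ij' by auto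
    finally show "(mat_adjoint W * W) $$ (i,j) = 1\<^sub>m n $$ (i,j)" .
  qed (use Wc in auto)
  have WW': "W * mat_adjoint W = 1\<^sub>m n"
    using mat_mult_left_right_inverse[OF adj_carrier[OF Wc] Wc WW] .
  have "col W 0 = ws' ! 0" unfolding W_def using len' wsc' n0 by simp
  also have "\<dots> = u" unfolding ws'_def using ws(3) n0 hd u vnormalize_unit[OF u]
    by (cases ws) auto
  finally show ?thesis using Wc WW WW' unfolding unitary_def by blast
qed


lemma spectral': "A \<in> carrier_mat n n \<Longrightarrow> mat_adjoint A = A \<Longrightarrow>
  \<exists>U l. unitary n U \<and> A = U * mat_diag n (\<lambda>k. complex_of_real (l k)) * mat_adjoint U"
proof (induction n arbitrary: A)
  case 0
  have "unitary 0 (1\<^sub>m 0)" unfolding unitary_def by simp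
  moreover have "A = 1\<^sub>m 0 * mat_diag 0 (\<lambda>k. complex_of_real 0) * mat_adjoint (1\<^sub>m 0)"
    using 0 by (intro eq_matI) auto
  ultimately show ?case by (rule_tac x="1\<^sub>m 0" in exI, rule_tac x="\<lambda>_. 0" in exI) simp
next
  case (Suc m A)
  let ?n = "Suc m"
  have A: "A \<in> carrier_mat ?n ?n" and Ah: "mat_adjoint A = A" using Suc by auto
  obtain e v where ev: "eigenvector A v e" using ev_exists[OF A] by auto
  have v: "v \<in> carrier_vec ?n" "v \<noteq> 0\<^sub>v ?n" "A *\<^sub>v v = e \<cdot>\<^sub>v v"
    using ev A unfolding eigenvector_def by auto
  define u where "u = vnormalize v"
  have u: "u \<in> carrier_vec ?n" "u \<bullet>c u = 1" unfolding u_def using v vnormalize_norm by auto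
  have Au: "A *\<^sub>v u = e \<cdot>\<^sub>v u"
    unfolding u_def vnormalize_def using v A by (simp add: mult_mat_vec smult_smult_assoc mult.commute)
  obtain W where W: "unitary ?n W" and W0: "col W 0 = u" using unit_ext[OF u] by blast
  have Wc: "W \<in> carrier_mat ?n ?n" and WW: "W * mat_adjoint W = 1\<^sub>m ?n" and WW': "mat_adjoint W * W = 1\<^sub>m ?n"
    using W unfolding unitary_def by auto
  have Wac: "mat_adjoint W \<in> carrier_mat ?n ?n" using Wc by simp
  define A' where "A' = mat_adjoint W * (A * W)"
  have A'c: "A' \<in> carrier_mat ?n ?n" unfolding A'_def using Wc A by simp
  have A'h: "mat_adjoint A' = A'"
    unfolding A'_def using Wc A Ah by (simp add: adj_mult[of _ ?n ?n _ ?n] adj_mult[of A ?n ?n W ?n] assoc_mult_mat[of _ ?n ?n _ ?n _ ?n])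
  have col0: "A' $$ (i, 0) = (if i = 0 then e else 0)" if i: "i < ?n" for i
  proof -
    have "A' $$ (i,0) = row (mat_adjoint W) i \<bullet> col (A * W) 0"
      unfolding A'_def using i Wc A by simp
    also have "col (A * W) 0 = e \<cdot>\<^sub>v u" using col_mult2[OF A Wc, of 0] W0 Au by simp
    also have "row (mat_adjoint W) i \<bullet> (e \<cdot>\<^sub>v u) = e * (row (mat_adjoint W) i \<bullet> col W 0)"
      using u Wc W0 i by simp
    also have "row (mat_adjoint W) i \<bullet> col W 0 = (mat_adjoint W * W) $$ (i,0)" using Wc i by simp
    also have "\<dots> = (if i = 0 then 1 else 0)" using WW' i by simp
    finally show ?thesis by simp
  qed
  have ce: "cnj e = e"
  proof -
    have "cnj (A' $$ (0,0)) = A' $$ (0,0)" using A'h A'c adj_index[of 0 A' 0] by simp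
    then show "cnj e = e" using col0[of 0] by simp
  qed
  have er: "e = complex_of_real (Re e)"
  proof -
    have "Im e = 0" using arg_cong[OF ce, of Im] by simp
    then show ?thesis by (simp add: complex_eq_iff)
  qed
  have row0: "A' $$ (0, j) = (if j = 0 then e else 0)" if j: "j < ?n" for j
  proof -
    have "A' $$ (0,j) = cnj (A' $$ (j,0))" using A'h A'c adj_index[of 0 A' j] j by simp
    then show ?thesis using col0[OF j] ce by (cases "j = 0") auto
  qed
  define A3 where "A3 = mat m m (\<lambda>(i,j). A' $$ (Suc i, Suc j))"
  have A3c: "A3 \<in> carrier_mat m m" unfolding A3_def by simp
  have A3h: "mat_adjoint A3 = A3"
  proof (rule eq_matI)
    fix i j assume ij: "i < dim_row A3" "j < dim_col A3"
    then have "mat_adjoint A' $$ (Suc i, Suc j) = A' $$ (Suc i, Suc j)" using A'h by simp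
    then show "mat_adjoint A3 $$ (i,j) = A3 $$ (i,j)" using ij A'c unfolding A3_def by simp
  qed (auto simp: A3_def)
  obtain U3 l3 where U3: "unitary m U3" and A3d: "A3 = U3 * mat_diag m (\<lambda>k. complex_of_real (l3 k)) * mat_adjoint U3"
    using Suc.IH[OF A3c A3h] by blast
  have U3c: "U3 \<in> carrier_mat m m" and U3U: "U3 * mat_adjoint U3 = 1\<^sub>m m" and U3U': "mat_adjoint U3 * U3 = 1\<^sub>m m"
    using U3 unfolding unitary_def by auto
  define D3 where "D3 = mat_diag m (\<lambda>k. complex_of_real (l3 k))"
  have D3c: "D3 \<in> carrier_mat m m" unfolding D3_def by simp
  define l where "l k = (if k = 0 then Re e else l3 (k - 1))" for k
  define B where "B = four_block_mat (1\<^sub>m 1) (0\<^sub>m 1 m) (0\<^sub>m m 1) U3"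
  define Ba where "Ba = four_block_mat (1\<^sub>m 1) (0\<^sub>m 1 m) (0\<^sub>m m 1) (mat_adjoint U3)"
  define E1 where "E1 = (mat_diag 1 (\<lambda>_. e) :: complex mat)"
  have E1c: "E1 \<in> carrier_mat 1 1" unfolding E1_def by simp
  have Bc: "B \<in> carrier_mat ?n ?n" unfolding B_def using U3c by auto
  have Bac: "Ba \<in> carrier_mat ?n ?n" unfolding Ba_def using U3c by auto
  have BaB: "mat_adjoint B = Ba"
    unfolding B_def Ba_def using U3c by (intro eq_matI) auto
  have BB: "B * Ba = 1\<^sub>m ?n"
    unfolding B_def Ba_def using U3c U3U
    by (subst mult_four_block_mat[of _ 1 1 _ m _ m _ _ 1 _ m]) auto
  have BB': "Ba * B = 1\<^sub>m ?n"
    unfolding B_def Ba_def using U3c U3U'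
    by (subst mult_four_block_mat[of _ 1 1 _ m _ m _ _ 1 _ m]) auto
  have Dg: "mat_diag ?n (\<lambda>k. complex_of_real (l k)) = four_block_mat E1 (0\<^sub>m 1 m) (0\<^sub>m m 1) D3"
    unfolding E1_def D3_def l_def using er by (intro eq_matI) (auto simp: mat_diag_def)
  have A'blk: "A' = four_block_mat E1 (0\<^sub>m 1 m) (0\<^sub>m m 1) A3"
  proof (rule eq_matI)
    fix i j assume ij: "i < dim_row (four_block_mat E1 (0\<^sub>m 1 m) (0\<^sub>m m 1) A3)"
      "j < dim_col (four_block_mat E1 (0\<^sub>m 1 m) (0\<^sub>m m 1) A3)"
    then have ij': "i < ?n" "j < ?n" using E1c A3c by auto
    show "A' $$ (i,j) = four_block_mat E1 (0\<^sub>m 1 m) (0\<^sub>m m 1) A3 $$ (i,j)"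
    proof (cases "i = 0 \<or> j = 0")
      case True
      then show ?thesis using ij' col0 row0 E1c A3c by (auto simp: E1_def mat_diag_def)
    next
      case False
      then obtain i' j' where "i = Suc i'" "j = Suc j'" by (metis not0_implies_Suc)
      then show ?thesis using ij' E1c A3c by (auto simp: A3_def)
    qed
  qed (use A'c E1c A3c in auto)
  have A'B: "A' = B * mat_diag ?n (\<lambda>k. complex_of_real (l k)) * Ba"
    unfolding Dg B_def Ba_def A'blk A3d D3_def[symmetric] using U3c D3c E1c
    by (simp add: mult_four_block_mat[of _ 1 1 _ m _ m _ _ 1 _ m])
  have AA: "A = W * A' * mat_adjoint W"
  proof -
    have "W * A' * mat_adjoint W = (W * mat_adjoint W) * A * (W * mat_adjoint W)"
      unfolding A'_def using Wc Wac A by (simp add: assoc_mult_mat[of _ ?n ?n _ ?n _ ?n])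
    then show ?thesis using WW A by simp
  qed
  define U where "U = W * B"
  have Uc: "U \<in> carrier_mat ?n ?n" unfolding U_def using Wc Bc by simp
  have Ua: "mat_adjoint U = Ba * mat_adjoint W" unfolding U_def using Wc Bc BaB adj_mult by metis
  have "unitary ?n U"
  proof -
    have "U * mat_adjoint U = W * (B * Ba) * mat_adjoint W"
      unfolding Ua unfolding U_def using Wc Wac Bc Bac by (simp add: assoc_mult_mat[of _ ?n ?n _ ?n _ ?n])
    then have 1: "U * mat_adjoint U = 1\<^sub>m ?n" using BB WW Wc by simp
    have "mat_adjoint U * U = Ba * (mat_adjoint W * W) * B"
      unfolding Ua unfolding U_def using Wc Wac Bc Bac by (simp add: assoc_mult_mat[of _ ?n ?n _ ?n _ ?n])
    then have 2: "mat_adjoint U * U = 1\<^sub>m ?n" using BB' WW' Bc Bac by simp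
    show ?thesis unfolding unitary_def using Uc 1 2 by blast
  qed
  moreover have "A = U * mat_diag ?n (\<lambda>k. complex_of_real (l k)) * mat_adjoint U"
  proof -
    have "U * mat_diag ?n (\<lambda>k. complex_of_real (l k)) * mat_adjoint U
       = W * B * mat_diag ?n (\<lambda>k. complex_of_real (l k)) * (Ba * mat_adjoint W)"
      unfolding Ua by (simp only: U_def)
    also have "\<dots> = W * (B * mat_diag ?n (\<lambda>k. complex_of_real (l k)) * Ba) * mat_adjoint W"
      using Wc Wac Bc Bac by (simp add: assoc_mult_mat[of _ ?n ?n _ ?n _ ?n])
    also have "\<dots> = A" using AA A'B by simp
    finally show ?thesis by simp
  qed
  ultimately show ?case by blast
qed


lemma smult_1[simp]: "(1::complex) \<cdot>\<^sub>m A = A" by (intro eq_matI) auto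
lemma smult_0: "A \<in> carrier_mat n m \<Longrightarrow> (0::complex) \<cdot>\<^sub>m A = 0\<^sub>m n m" by (intro eq_matI) auto


definition scomb :: "nat \<Rightarrow> nat set \<Rightarrow> (nat \<Rightarrow> complex mat) \<Rightarrow> (nat \<Rightarrow> real) \<Rightarrow> complex mat" where
  "scomb n I P c = msum n I (\<lambda>i. complex_of_real (c i) \<cdot>\<^sub>m P i)"

locale projfam =
  fixes n :: nat and I :: "nat set" and P :: "nat \<Rightarrow> complex mat"
  assumes fin: "finite I"
    and Pc: "\<And>i. i \<in> I \<Longrightarrow> P i \<in> carrier_mat n n"
    and Ph: "\<And>i. i \<in> I \<Longrightarrow> mat_adjoint (P i) = P i"
    and Po: "\<And>i j. i \<in> I \<Longrightarrow> j \<in> I \<Longrightarrow> P i * P j = (if i = j then P i else 0\<^sub>m n n)"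
    and Ps: "msum n I P = 1\<^sub>m n"
begin

declare Pc[simp]

abbreviation S where "S \<equiv> scomb n I P"

lemma S_carrier[simp]: "S c \<in> carrier_mat n n" "dim_row (S c) = n" "dim_col (S c) = n"
  by (auto simp: scomb_def)

lemma S_mult: "S c * S c' = S (\<lambda>i. c i * c' i)"
proof -
  have "S c * S c' = msum n I (\<lambda>i. (complex_of_real (c i) \<cdot>\<^sub>m P i) * S c')"
    unfolding scomb_def[of n I P c] by (rule msum_mult_right) (auto simp: Pc)
  also have "\<dots> = msum n I (\<lambda>i. complex_of_real (c i * c' i) \<cdot>\<^sub>m P i)"
  proof (rule msum_cong)
    fix i assume i: "i \<in> I"
    have "(complex_of_real (c i) \<cdot>\<^sub>m P i) * S c' = msum n I (\<lambda>j. (complex_of_real (c i) \<cdot>\<^sub>m P i) * (complex_of_real (c' j) \<cdot>\<^sub>m P j))"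
      unfolding scomb_def[of n I P c'] by (rule msum_mult_left) (auto simp: Pc i)
    also have "\<dots> = msum n I (\<lambda>j. if j = i then complex_of_real (c i * c' i) \<cdot>\<^sub>m P i else 0\<^sub>m n n)"
    proof (rule msum_cong)
      fix j assume j: "j \<in> I"
      have "(complex_of_real (c i) \<cdot>\<^sub>m P i) * (complex_of_real (c' j) \<cdot>\<^sub>m P j)
          = complex_of_real (c i * c' j) \<cdot>\<^sub>m (P i * P j)"
        using Pc[OF i] Pc[OF j] by (intro eq_matI) (auto simp: scalar_prod_def sum_distrib_left intro!: sum.cong)
      then show "(complex_of_real (c i) \<cdot>\<^sub>m P i) * (complex_of_real (c' j) \<cdot>\<^sub>m P j) =
         (if j = i then complex_of_real (c i * c' i) \<cdot>\<^sub>m P i else 0\<^sub>m n n)"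
        using Po[OF i j] by auto
    qed
    also have "\<dots> = complex_of_real (c i * c' i) \<cdot>\<^sub>m P i"
      by (rule msum_delta) (auto simp: fin i Pc)
    finally show "(complex_of_real (c i) \<cdot>\<^sub>m P i) * S c' = complex_of_real (c i * c' i) \<cdot>\<^sub>m P i" .
  qed
  finally show ?thesis by (simp add: scomb_def)
qed

lemma S_adj: "mat_adjoint (S c) = S c"
  unfolding scomb_def
  by (subst msum_adj) (auto simp: Pc Ph adj_smult intro!: msum_cong)

lemma S_minus: "S c - S c' = S (\<lambda>i. c i - c' i)"
  unfolding scomb_def
  by (subst msum_minus) (auto simp: Pc intro!: msum_cong eq_matI simp: left_diff_distrib)

lemma S_cong: "(\<And>i. i \<in> I \<Longrightarrow> c i = c' i) \<Longrightarrow> S c = S c'"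
  unfolding scomb_def by (rule msum_cong) simp

lemma S_smult: "complex_of_real r \<cdot>\<^sub>m S c = S (\<lambda>i. r * c i)"
  unfolding scomb_def
  by (subst msum_smult) (auto simp: Pc intro!: msum_cong eq_matI)

lemma one_S: "1\<^sub>m n = S (\<lambda>_. 1)"
  unfolding scomb_def using Ps by (auto intro!: msum_cong)

lemma P_S: "j \<in> I \<Longrightarrow> P j = S (\<lambda>i. if i = j then 1 else 0)"
  unfolding scomb_def
  by (subst msum_delta[symmetric, of I j _ n]) (auto simp: fin Pc smult_0[OF Pc] intro!: msum_cong)

lemma P_tr: assumes i: "i \<in> I"
  shows "mtrace (P i) = complex_of_real (\<Sum>k<n. \<Sum>j<n. (cmod (P i $$ (k,j)))\<^sup>2)"
proof -
  have "mtrace (P i) = mtrace (P i * P i)" using Po[OF i i] by simp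
  also have "\<dots> = (\<Sum>k<n. \<Sum>j<n. P i $$ (k,j) * P i $$ (j,k))"
    using Pc[OF i] by (auto simp: mtrace_def scalar_prod_def atLeast0LessThan)
  also have "\<dots> = (\<Sum>k<n. \<Sum>j<n. P i $$ (k,j) * cnj (P i $$ (k,j)))"
  proof (intro sum.cong refl)
    fix k j assume "k \<in> {..<n}" "j \<in> {..<n}"
    then have "mat_adjoint (P i) $$ (j,k) = cnj (P i $$ (k,j))" using Pc[OF i] by auto
    then show "P i $$ (k,j) * P i $$ (j,k) = P i $$ (k,j) * cnj (P i $$ (k,j))" using Ph[OF i] by simp
  qed
  also have "\<dots> = complex_of_real (\<Sum>k<n. \<Sum>j<n. (cmod (P i $$ (k,j)))\<^sup>2)"
    by (simp only: of_real_sum complex_norm_square)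
  finally show ?thesis .
qed

definition t where "t i = Re (mtrace (P i))"

lemma P_tr': "i \<in> I \<Longrightarrow> mtrace (P i) = complex_of_real (t i)"
  unfolding t_def using P_tr by simp

lemma t_pos: assumes i: "i \<in> I" and nz: "P i \<noteq> 0\<^sub>m n n" shows "t i > 0"
proof -
  obtain k j where kj: "k < n" "j < n" "P i $$ (k,j) \<noteq> 0"
    using nz Pc[OF i] by (metis carrier_matD(1,2) eq_matI index_zero_mat(1,2,3))
  have "0 < (cmod (P i $$ (k,j)))\<^sup>2" using kj by simp
  also have "\<dots> \<le> (\<Sum>j<n. (cmod (P i $$ (k,j)))\<^sup>2)"
    by (rule member_le_sum) (use kj in auto)
  also have "\<dots> \<le> (\<Sum>k<n. \<Sum>j<n. (cmod (P i $$ (k,j)))\<^sup>2)"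
    by (rule member_le_sum[where f="\<lambda>k. \<Sum>j<n. (cmod (P i $$ (k,j)))\<^sup>2"]) (use kj in \<open>auto intro: sum_nonneg\<close>)
  finally show ?thesis unfolding t_def using P_tr[OF i] by simp
qed

lemma S_trace: "mtrace (S c) = complex_of_real (\<Sum>i\<in>I. c i * t i)"
  unfolding scomb_def
  by (subst mtrace_msum) (auto simp: Pc mtrace_smult[OF Pc] P_tr' intro!: sum.cong)

lemma S_mfun: "mfun f (S c) = S (\<lambda>i. f (c i))"
proof -
  let ?A = "S c"
  obtain U0 and l0 :: "nat \<Rightarrow> real" where u0: "unitary n U0"
      and a0: "?A = U0 * mat_diag n (\<lambda>k. complex_of_real (l0 k)) * mat_adjoint U0"
      using spectral'[OF S_carrier(1)[of c] S_adj[of c]] by (elim exE conjE) (rule that; assumption)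
  have ex: "\<exists>B U (l :: nat \<Rightarrow> real). unitary n U \<and>
      ?A = U * mat_diag n (\<lambda>k. complex_of_real (l k)) * mat_adjoint U \<and>
      B = U * mat_diag n (\<lambda>k. complex_of_real (f (l k))) * mat_adjoint U"
    by (intro exI conjI, rule u0, rule a0, rule refl)
  have Bdef: "mfun f ?A = (SOME B. \<exists>U (l :: nat \<Rightarrow> real). unitary n U \<and>
      ?A = U * mat_diag n (\<lambda>k. complex_of_real (l k)) * mat_adjoint U \<and>
      B = U * mat_diag n (\<lambda>k. complex_of_real (f (l k))) * mat_adjoint U)"
    unfolding mfun_def S_carrier(2) by (rule refl)
  have "\<exists>U (l :: nat \<Rightarrow> real). unitary n U \<and>
      ?A = U * mat_diag n (\<lambda>k. complex_of_real (l k)) * mat_adjoint U \<and>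
      mfun f ?A = U * mat_diag n (\<lambda>k. complex_of_real (f (l k))) * mat_adjoint U"
    unfolding Bdef by (rule someI_ex[OF ex])
  then obtain U and l :: "nat \<Rightarrow> real" where
    U: "unitary n U" and A: "?A = U * mat_diag n (\<lambda>k. complex_of_real (l k)) * mat_adjoint U"
    and B: "mfun f ?A = U * mat_diag n (\<lambda>k. complex_of_real (f (l k))) * mat_adjoint U"
    by (elim exE conjE) (rule that; assumption)
  define D where "D = mat_diag n (\<lambda>k. complex_of_real (l k))"
  define Df where "Df = mat_diag n (\<lambda>k. complex_of_real (f (l k)))"
  have Uc: "U \<in> carrier_mat n n" and UU: "U * mat_adjoint U = 1\<^sub>m n" and UU': "mat_adjoint U * U = 1\<^sub>m n"
    using U unfolding unitary_def by auto
  have Uac: "mat_adjoint U \<in> carrier_mat n n" using Uc by simp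
  have Dc: "D \<in> carrier_mat n n" "Df \<in> carrier_mat n n" unfolding D_def Df_def by auto
  have UUX: "U * (mat_adjoint U * X) = X" if "X \<in> carrier_mat n k" for X k
  proof -
    have "U * (mat_adjoint U * X) = (U * mat_adjoint U) * X" using assoc_mult_mat[OF Uc Uac that] by simp
    then show ?thesis using UU that by simp
  qed
  have UUX': "mat_adjoint U * (U * X) = X" if "X \<in> carrier_mat n k" for X k
  proof -
    have "mat_adjoint U * (U * X) = (mat_adjoint U * U) * X" using assoc_mult_mat[OF Uac Uc that] by simp
    then show ?thesis using UU' that by simp
  qed
  have PPX: "P i * (P j * X) = (if i = j then P i * X else 0\<^sub>m n k)" if "X \<in> carrier_mat n k" "i \<in> I" "j \<in> I" for X k i j
  proof -
    have "P i * (P j * X) = (P i * P j) * X" using assoc_mult_mat[OF Pc[OF that(2)] Pc[OF that(3)] that(1)] by simp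
    then show ?thesis using Po[OF that(2,3)] that(1) by simp
  qed
  note assoc = assoc_mult_mat[of _ n n _ n _ n] mult_carrier_mat[of _ _ n]
  define Q where "Q i = mat_adjoint U * (P i * U)" for i
  have Qc: "i \<in> I \<Longrightarrow> Q i \<in> carrier_mat n n" for i unfolding Q_def using Uc Pc by auto
  have QQ: "Q i * Q j = (if i = j then Q i else 0\<^sub>m n n)" if ij: "i \<in> I" "j \<in> I" for i j
  proof -
    have "Q i * Q j = mat_adjoint U * (P i * (U * (mat_adjoint U * (P j * U))))"
      unfolding Q_def using Uc Uac Pc[OF ij(1)] Pc[OF ij(2)] by (simp add: assoc)
    also have "\<dots> = mat_adjoint U * (P i * (P j * U))" using UUX[OF mult_carrier_mat[OF Pc[OF ij(2)] Uc]] by simp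
    also have "\<dots> = (if i = j then Q i else 0\<^sub>m n n)" using PPX[OF Uc ij] Uac unfolding Q_def by (auto simp: right_mult_zero_mat)
    finally show ?thesis .
  qed
  have QS: "msum n I Q = 1\<^sub>m n"
  proof -
    have "msum n I Q = mat_adjoint U * msum n I (\<lambda>i. P i * U)"
      unfolding Q_def using Uc Pc by (subst msum_mult_left) auto
    also have "\<dots> = mat_adjoint U * (msum n I P * U)"
      using Uc Pc by (subst msum_mult_right) auto
    also have "\<dots> = 1\<^sub>m n" using Ps UU' Uc by simp
    finally show ?thesis .
  qed
  have DA: "D = mat_adjoint U * (?A * U)"
    unfolding A D_def using Uc Uac UUX'[OF mat_diag_dim] UU' by (simp add: assoc right_mult_one_mat[OF mat_diag_dim])
  have DQs: "D = msum n I (\<lambda>i. complex_of_real (c i) \<cdot>\<^sub>m Q i)"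
  proof -
    have "D = mat_adjoint U * msum n I (\<lambda>i. complex_of_real (c i) \<cdot>\<^sub>m P i * U)"
      unfolding DA scomb_def using Uc Pc by (subst msum_mult_right) auto
    also have "\<dots> = msum n I (\<lambda>i. mat_adjoint U * (complex_of_real (c i) \<cdot>\<^sub>m P i * U))"
      using Uc Pc by (subst msum_mult_left) auto
    also have "\<dots> = msum n I (\<lambda>i. complex_of_real (c i) \<cdot>\<^sub>m Q i)"
      unfolding Q_def using Uc Pc
      by (intro msum_cong) (simp add: mult_smult_assoc_mat[of _ n n _ n] mult_smult_distrib[of _ n n _ n])
    finally show ?thesis .
  qed
  have DQ: "D * Q j = complex_of_real (c j) \<cdot>\<^sub>m Q j" if j: "j \<in> I" for j
  proof -
    have "D * Q j = msum n I (\<lambda>i. complex_of_real (c i) \<cdot>\<^sub>m Q i * Q j)"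
      unfolding DQs using Qc j by (subst msum_mult_right) auto
    also have "\<dots> = msum n I (\<lambda>i. if i = j then complex_of_real (c j) \<cdot>\<^sub>m Q j else 0\<^sub>m n n)"
      using Qc j QQ by (intro msum_cong) (auto simp: mult_smult_assoc_mat[of _ n n _ n])
    also have "\<dots> = complex_of_real (c j) \<cdot>\<^sub>m Q j" using fin j Qc by (intro msum_delta) auto
    finally show ?thesis .
  qed
  have DfQ: "Df * Q j = complex_of_real (f (c j)) \<cdot>\<^sub>m Q j" if j: "j \<in> I" for j
  proof (rule eq_matI)
    fix k m assume km: "k < dim_row (complex_of_real (f (c j)) \<cdot>\<^sub>m Q j)" "m < dim_col (complex_of_real (f (c j)) \<cdot>\<^sub>m Q j)"
    then have km': "k < n" "m < n" using Qc[OF j] by auto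
    have "(D * Q j) $$ (k,m) = complex_of_real (l k) * Q j $$ (k,m)"
      unfolding D_def using km' Qc[OF j] by (simp add: mat_diag_mult_left[of _ n n])
    then have eq: "complex_of_real (l k) * Q j $$ (k,m) = complex_of_real (c j) * Q j $$ (k,m)"
      using DQ[OF j] km' Qc[OF j] by (simp, metis)
    have "(Df * Q j) $$ (k,m) = complex_of_real (f (l k)) * Q j $$ (k,m)"
      unfolding Df_def using km' Qc[OF j] by (simp add: mat_diag_mult_left[of _ n n])
    also have "\<dots> = complex_of_real (f (c j)) * Q j $$ (k,m)"
    proof (cases "Q j $$ (k,m) = 0")
      case False
      then have "l k = c j" using eq by simp
      then show ?thesis by simp
    qed simp
    finally show "(Df * Q j) $$ (k,m) = (complex_of_real (f (c j)) \<cdot>\<^sub>m Q j) $$ (k,m)"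
      using km' Qc[OF j] by simp
  qed (use Qc[OF j] Dc in auto)
  have Dfs: "Df = msum n I (\<lambda>j. complex_of_real (f (c j)) \<cdot>\<^sub>m Q j)"
  proof -
    have "Df = Df * msum n I Q" using QS Dc by simp
    also have "\<dots> = msum n I (\<lambda>j. Df * Q j)" using Dc Qc by (subst msum_mult_left) auto
    also have "\<dots> = msum n I (\<lambda>j. complex_of_real (f (c j)) \<cdot>\<^sub>m Q j)" using DfQ by (intro msum_cong) auto
    finally show ?thesis .
  qed
  have "mfun f ?A = U * (Df * mat_adjoint U)" using B Uc Uac Dc unfolding Df_def by (simp add: assoc)
  also have "\<dots> = U * msum n I (\<lambda>j. complex_of_real (f (c j)) \<cdot>\<^sub>m Q j * mat_adjoint U)"
    unfolding Dfs using Qc Uc by (subst msum_mult_right) auto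
  also have "\<dots> = msum n I (\<lambda>j. U * (complex_of_real (f (c j)) \<cdot>\<^sub>m Q j * mat_adjoint U))"
    using Qc Uc by (subst msum_mult_left) auto
  also have "\<dots> = msum n I (\<lambda>j. complex_of_real (f (c j)) \<cdot>\<^sub>m P j)"
  proof (rule msum_cong)
    fix j assume j: "j \<in> I"
    have "U * (Q j * mat_adjoint U) = P j"
    proof -
      have "U * (Q j * mat_adjoint U) = U * (mat_adjoint U * (P j * (U * mat_adjoint U)))"
        unfolding Q_def using Uc Uac Pc[OF j] by (simp add: assoc)
      also have "\<dots> = P j" using UUX[of "P j" n] UU Pc[OF j] by simp
      finally show ?thesis .
    qed
    then show "U * (complex_of_real (f (c j)) \<cdot>\<^sub>m Q j * mat_adjoint U) = complex_of_real (f (c j)) \<cdot>\<^sub>m P j"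
      using Uc Qc[OF j] by (simp add: mult_smult_assoc_mat[of _ n n _ n] mult_smult_distrib[of _ n n _ n])
  qed
  finally show ?thesis unfolding scomb_def .
qed

end

theorem corollary4:
  fixes d M :: nat and H :: "complex mat" and lam :: "nat \<Rightarrow> real"
    and P :: "nat \<Rightarrow> complex mat" and \<beta> :: real
  assumes H: "H \<in> carrier_mat d d" "hermitian H"
    and M: "M \<ge> 1"
    and lam_mono: "\<And>i j. 1 \<le> i \<Longrightarrow> i < j \<Longrightarrow> j \<le> M \<Longrightarrow> lam i < lam j"
    and P_carrier: "\<And>i. i \<in> {1..M} \<Longrightarrow> P i \<in> carrier_mat d d"
    and P_herm: "\<And>i. i \<in> {1..M} \<Longrightarrow> hermitian (P i)"
    and P_nonzero: "\<And>i. i \<in> {1..M} \<Longrightarrow> P i \<noteq> 0\<^sub>m d d"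
    and P_orth: "\<And>i j. i \<in> {1..M} \<Longrightarrow> j \<in> {1..M} \<Longrightarrow>
                   P i * P j = (if i = j then P i else 0\<^sub>m d d)"
    and P_sum: "msum d {1..M} P = 1\<^sub>m d"
    and H_decomp: "H = msum d {1..M} (\<lambda>i. complex_of_real (lam i) \<cdot>\<^sub>m P i)"
    and beta: "\<beta> \<ge> 0"
  defines "\<gamma> \<equiv> (1 / mtrace (P 1)) \<cdot>\<^sub>m P 1"
    and "\<tau> \<equiv> (1 / mtrace (mfun (\<lambda>x. exp (- \<beta> * x)) H)) \<cdot>\<^sub>m mfun (\<lambda>x. exp (- \<beta> * x)) H"
  shows "(1/2) * trace_norm (\<tau> - \<gamma>) = 1 - fidelity \<tau> \<gamma>
       \<and> rel_entropy \<gamma> \<tau> = - ln (fidelity \<tau> \<gamma>)"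
proof -
  let ?I = "{1..M}"
  interpret pf: projfam d ?I P
    by unfold_locales (use P_carrier P_herm P_orth P_sum in \<open>auto simp: hermitian_def\<close>)
  let ?S = "scomb d ?I P"
  let ?t = "pf.t"
  have one: "1 \<in> ?I" using M by simp
  have tpos: "\<And>i. i \<in> ?I \<Longrightarrow> ?t i > 0" using pf.t_pos P_nonzero by blast
  define e where "e i = exp (- \<beta> * lam i)" for i
  define Z where "Z = (\<Sum>i\<in>?I. e i * ?t i)"
  have Zpos: "Z > 0" unfolding Z_def e_def
    by (rule sum_pos) (use M tpos in auto)
  define a where "a i = (1 / Z) * e i" for i
  define g :: "nat \<Rightarrow> real" where "g i = (1 / ?t 1) * (if i = 1 then 1 else 0)" for i
  have Hs: "H = ?S lam" unfolding H_decomp scomb_def ..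
  have E: "mfun (\<lambda>x. exp (- \<beta> * x)) H = ?S e"
    unfolding Hs pf.S_mfun e_def ..
  have trE: "mtrace (mfun (\<lambda>x. exp (- \<beta> * x)) H) = complex_of_real Z"
    unfolding E pf.S_trace Z_def ..
  have tau: "\<tau> = ?S a"
  proof -
    have "\<tau> = complex_of_real (1 / Z) \<cdot>\<^sub>m ?S e" unfolding \<tau>_def trE unfolding E by simp
    also have "\<dots> = ?S a" unfolding pf.S_smult a_def ..
    finally show ?thesis .
  qed
  have gam: "\<gamma> = ?S g"
  proof -
    have "\<gamma> = complex_of_real (1 / ?t 1) \<cdot>\<^sub>m ?S (\<lambda>i. if i = 1 then 1 else 0)"
      unfolding \<gamma>_def pf.P_tr'[OF one] pf.P_S[OF one, symmetric] by simp
    also have "\<dots> = ?S g" unfolding pf.S_smult g_def ..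
    finally show ?thesis .
  qed
  have sum_a: "(\<Sum>i\<in>?I. a i * ?t i) = 1"
  proof -
    have "(\<Sum>i\<in>?I. a i * ?t i) = (1 / Z) * Z"
      unfolding a_def Z_def by (simp add: sum_distrib_left mult.assoc)
    then show ?thesis using Zpos by simp
  qed
  have a_pos: "a i > 0" for i unfolding a_def e_def using Zpos by simp
  have split: "(\<Sum>i\<in>?I. f i) = f 1 + (\<Sum>i\<in>{2..M}. f i)" for f :: "nat \<Rightarrow> real"
    using M by (simp add: sum.atLeast_Suc_atMost numeral_2_eq_2)
  define p where "p = a 1 * ?t 1"
  have rest: "(\<Sum>i\<in>{2..M}. a i * ?t i) = 1 - p"
    using sum_a split[of "\<lambda>i. a i * ?t i"] unfolding p_def by simp
  have rest_nn: "(\<Sum>i\<in>{2..M}. a i * ?t i) \<ge> 0"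
    by (rule sum_nonneg) (use a_pos tpos in \<open>auto intro: less_imp_le\<close>)
  have p_le: "p \<le> 1" using rest rest_nn by simp
  have p_pos: "p > 0" unfolding p_def using a_pos tpos[OF one] by simp
  have TN: "trace_norm (\<tau> - \<gamma>) = (\<Sum>i\<in>?I. sqrt ((a i - g i) * (a i - g i)) * ?t i)"
    unfolding trace_norm_def tau gam pf.S_minus pf.S_adj pf.S_mult pf.S_mfun pf.S_trace by simp
  also have "\<dots> = sqrt ((a 1 - g 1) * (a 1 - g 1)) * ?t 1 + (\<Sum>i\<in>{2..M}. a i * ?t i)"
    unfolding split by (auto simp: g_def intro!: sum.cong simp: abs_of_pos[OF a_pos])
  also have "\<dots> = 2 * (1 - p)"
  proof -
    have "sqrt ((a 1 - g 1) * (a 1 - g 1)) * ?t 1 = \<bar>a 1 - 1 / ?t 1\<bar> * ?t 1"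
      unfolding g_def by (simp add: real_sqrt_abs2[unfolded power2_eq_square])
    also have "\<dots> = \<bar>(a 1 - 1 / ?t 1) * ?t 1\<bar>" using tpos[OF one] by (simp add: abs_mult)
    also have "\<dots> = \<bar>p - 1\<bar>"
    proof -
      have "(a 1 - 1 / ?t 1) * ?t 1 = p - 1" unfolding p_def using tpos[OF one] by (simp add: field_simps)
      then show ?thesis by simp
    qed
    also have "\<dots> = 1 - p" using p_le by simp
    finally show ?thesis using rest by simp
  qed
  finally have TN': "trace_norm (\<tau> - \<gamma>) = 2 * (1 - p)" .
  define h :: "nat \<Rightarrow> real" where "h i = sqrt (a i) * sqrt (g i)" for i
  have "fidelity \<tau> \<gamma> = (\<Sum>i\<in>?I. sqrt (h i * h i) * ?t i)\<^sup>2"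
    unfolding fidelity_def trace_norm_def tau gam pf.S_mfun pf.S_adj pf.S_mult pf.S_trace h_def by simp
  also have "(\<Sum>i\<in>?I. sqrt (h i * h i) * ?t i) = sqrt (h 1 * h 1) * ?t 1"
    unfolding split by (auto simp: g_def h_def intro!: sum.neutral)
  also have "(sqrt (h 1 * h 1) * ?t 1)\<^sup>2 = p"
    unfolding h_def g_def p_def using a_pos[of 1] tpos[OF one]
    by (simp add: power2_eq_square real_sqrt_mult field_simps)
  finally have F: "fidelity \<tau> \<gamma> = p" .
  have "rel_entropy \<gamma> \<tau> = (\<Sum>i\<in>?I. g i * (ln (g i) - ln (a i)) * ?t i)"
    unfolding rel_entropy_def tau gam pf.S_mfun pf.S_minus pf.S_mult pf.S_trace by simp
  also have "\<dots> = g 1 * (ln (g 1) - ln (a 1)) * ?t 1"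
    unfolding split by (auto simp: g_def intro!: sum.neutral)
  also have "\<dots> = - ln p"
    unfolding g_def p_def using a_pos[of 1] tpos[OF one] by (simp add: ln_mult ln_div)
  finally have R: "rel_entropy \<gamma> \<tau> = - ln p" .
  show ?thesis using TN' F R by simp
qed

end
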